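(* Suppose that Assumptions (A1)–(A4) hold. Then there is a constant $C>0$ depending only on $\alpha$, $\gamma$, the constants in (A1) and (A2), and $\|V\|_{C^2}$ (independent of $\epsilon\in(0,1]$) such that for every solution $(u,m)$ of Problem 1, each of the functions $u$, $u_x$, $m$, $m_x$ has $L^\infty(\mathbb{T})$-norm at most $C/\sqrt{\epsilon}$ and satisfies $|w(x)-w(y)|\le \frac{C}{\sqrt\epsilon}|x-y|^{1/2}$ for all $x,y\in\mathbb{T}$ (where $|x-y|$ is the distance on $\mathbb{T}$). The same holds, with the same constant, if $V$ is replaced by $\lambda V$ for any $\lambda\in[0,1]$.
   Context: Let $\mathbb{T}=\mathbb{R}/\mathbb{Z}$ be the one-dimensional torus; functions on $\mathbb{T}$ are identified with $1$-periodic functions on $\mathbb{R}$. Let $H:\mathbb{R}\to\mathbb{R}$ be of class $C^2$, $V:\mathbb{T}\to\mathbb{R}$ continuous, $\alpha>0$, and $0<\epsilon\le 1$. We say $(u,m)$ solves Problem 1 if $u,m\in C^2(\mathbb{T})$, $m>0$ on $\mathbb{T}$, and on $\mathbb{T}$: $$u-u_{xx}+H(u_x)+V(x)=m^\alpha+\epsilon(m-m_{xx}),\qquad m-m_{xx}-(H'(u_x)m)_x=1-\epsilon(u-u_{xx}).$$ Assumptions: (A1) there exist constants $C_1,C_2,C_3>0$ and $\gamma>1$ such that $-C_1+C_2|p|^\gamma\le H(p)\le C_1+C_3|p|^\gamma$ for all $p\in\mathbb{R}$. (A2) There exist constants $\tilde C_1,\tilde C_2,\tilde C_3>0$ such that $-\tilde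 C_1+\tilde C_2|p|^\gamma\le pH'(p)-H(p)\le \tilde C_1+\tilde C_3|p|^\gamma$ for all $p$ (same $\gamma$ as in (A1)). (A3) $V$ is of class $C^2$. (A4) $H$ is convex. *)

theory Defs
  imports "HOL-Analysis.Analysis"
begin

text \<open>Functions on the torus R/Z are identified with 1-periodic functions on R.\<close>
definition periodic1 :: "(real \<Rightarrow> real) \<Rightarrow> bool" where
  "periodic1 f \<longleftrightarrow> (\<forall>x. f (x + 1) = f x)"

definition C2 :: "(real \<Rightarrow> real) \<Rightarrow> bool" where
  "C2 f \<longleftrightarrow> (\<exists>f' f''. (\<forall>x. (f has_real_derivative f' x) (at x)) \<and>
                        (\<forall>x. (f' has_real_derivative f'' x) (at x)) \<and>
                        continuous_on UNIV f'')"

definition c2norm :: "(real \<Rightarrow> real) \<Rightarrow> real" where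
  "c2norm V = (SUP x. \<bar>V x\<bar>) + (SUP x. \<bar>deriv V x\<bar>) + (SUP x. \<bar>deriv (deriv V) x\<bar>)"

definition tdist :: "real \<Rightarrow> real \<Rightarrow> real" where
  "tdist x y = (INF k::int. \<bar>x - y - of_int k\<bar>)"

definition solves_P1 ::
  "(real \<Rightarrow> real) \<Rightarrow> (real \<Rightarrow> real) \<Rightarrow> real \<Rightarrow> real \<Rightarrow> (real \<Rightarrow> real) \<Rightarrow> (real \<Rightarrow> real) \<Rightarrow> bool" where
  "solves_P1 H V \<alpha> \<epsilon> u m \<longleftrightarrow>
     periodic1 u \<and> periodic1 m \<and> C2 u \<and> C2 m \<and> (\<forall>x. m x > 0) \<and>
     (\<forall>x. u x - deriv (deriv u) x + H (deriv u x) + V x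
            = m x powr \<alpha> + \<epsilon> * (m x - deriv (deriv m) x)) \<and>
     (\<forall>x. m x - deriv (deriv m) x - deriv (\<lambda>y. deriv H (deriv u y) * m y) x
            = 1 - \<epsilon> * (u x - deriv (deriv u) x))"

end

theory Submission
  imports Defs
begin

lemma convex_second_deriv_nonneg:
  fixes H h1 h2 :: "real \<Rightarrow> real"
  assumes cv: "convex_on UNIV H"
    and d1: "\<And>x. (H has_real_derivative h1 x) (at x)"
    and d2: "\<And>x. (h1 has_real_derivative h2 x) (at x)"
  shows "h2 x \<ge> 0"
proof (rule ccontr)
  assume "\<not> h2 x \<ge> 0"
  hence neg: "h2 x < 0" by simp
  obtain d where d: "d > 0" "\<And>h. h > 0 \<Longrightarrow> h < d \<Longrightarrow> h1 x > h1 (x + h)"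
    using DERIV_neg_dec_right[OF d2 neg] by blast
  obtain e where e: "e > 0" "\<And>h. h > 0 \<Longrightarrow> h < e \<Longrightarrow> h1 x < h1 (x - h)"
    using DERIV_neg_dec_left[OF d2 neg] by blast
  define s where "s = min d e / 2"
  have s: "s > 0" "s < d" "s < e" using d e by (auto simp: s_def)
  obtain z where z: "x < z" "z < x + s" "H (x + s) - H x = (x + s - x) * h1 z"
    using MVT2[of x "x+s" H h1] s d1 by auto
  obtain z' where z': "x - s < z'" "z' < x" "H x - H (x - s) = (x - (x - s)) * h1 z'"
    using MVT2[of "x - s" x H h1] s d1 by auto
  have "h1 z < h1 x" using d(2)[of "z - x"] z s by auto
  moreover have "h1 z' > h1 x" using e(2)[of "x - z'"] z' s by auto
  ultimately have "H (x + s) - H x < H x - H (x - s)"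
    using z(3) z'(3) s by (simp add: mult_strict_left_mono)
  moreover have "H ((1 - 1/2) *\<^sub>R (x - s) + (1/2) *\<^sub>R (x + s)) \<le> (1 - 1/2) * H (x - s) + (1/2) * H (x + s)"
    by (rule convex_onD[OF cv]) auto
  moreover have "(1 - 1/2) *\<^sub>R (x - s) + (1/2) *\<^sub>R (x + s) = x" by (simp add: field_simps)
  ultimately show False by (simp add: algebra_simps)
qed

lemma periodic_nat: fixes f :: "real \<Rightarrow> real" assumes "\<And>x. f (x + 1) = (f x :: real)" shows "f (x + real n) = f x"
proof (induction n arbitrary: x)
  case 0 then show ?case by simp
next
  case (Suc n)
  have "f (x + real (Suc n)) = f ((x + real n) + 1)" by (simp add: algebra_simps)
  also have "\<dots> = f (x + real n)" by (rule assms)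
  finally show ?case using Suc by simp
qed

lemma periodic_int: fixes f :: "real \<Rightarrow> real" assumes "\<And>x. f (x + 1) = (f x :: real)" shows "f (x + real_of_int k) = f x"
proof (cases "k \<ge> 0")
  case True
  then obtain n where "k = int n" by (metis nonneg_eq_int)
  then show ?thesis using periodic_nat[of f, OF assms] by simp
next
  case False
  define n where "n = nat (- k)"
  have n: "k = - int n" using False by (simp add: n_def)
  have "f x = f ((x - real n) + real n)" by simp
  also have "\<dots> = f (x - real n)" by (rule periodic_nat[of f, OF assms])
  finally show ?thesis using n by simp
qed

lemma periodic_deriv:
  fixes f f' :: "real \<Rightarrow> real"
  assumes p: "\<And>x. f (x + 1) = (f x :: real)" and d: "\<And>x. (f has_real_derivative f' x) (at x)"
  shows "f' (x + 1) = f' x"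
proof -
  have "((\<lambda>y. f (y + 1)) has_real_derivative f' (x + 1) * 1) (at x)"
    by (rule DERIV_chain2[OF d]) (auto intro!: derivative_eq_intros)
  moreover have "(\<lambda>y. f (y + 1)) = f" using p by auto
  ultimately show ?thesis using d[of x] DERIV_unique by fastforce
qed

lemma periodic_bounded:
  fixes f :: "real \<Rightarrow> real"
  assumes p: "\<And>x. f (x + 1) = (f x :: real)" and c: "continuous_on UNIV f"
  shows "\<exists>B. \<forall>x. \<bar>f x\<bar> \<le> B"
proof -
  have "compact (f ` {0..1})"
    by (rule compact_continuous_image[OF continuous_on_subset[OF c]]) auto
  then obtain B where B: "\<And>y. y \<in> f ` {0..1} \<Longrightarrow> norm y \<le> B"
    using compact_imp_bounded bounded_iff by metis
  have "\<bar>f x\<bar> \<le> B" for x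
  proof -
    have "f x = f (x + real_of_int (- \<lfloor>x\<rfloor>))" using periodic_int[of f, OF p] by metis
    moreover have "x + real_of_int (- \<lfloor>x\<rfloor>) \<in> {0..1}"
      by (auto simp: floor_le_iff) (smt (verit) real_of_int_floor_add_one_gt)
    ultimately show ?thesis using B by fastforce
  qed
  then show ?thesis by blast
qed

lemma sq_diff_le:
  fixes w w' :: "real \<Rightarrow> real"
  assumes ab: "a \<le> b" and d: "\<And>x. (w has_real_derivative w' x) (at x)"
    and c: "continuous_on UNIV w'"
  shows "(w b - w a)^2 \<le> (b - a) * integral {a..b} (\<lambda>x. (w' x)^2)"
proof (cases "a = b")
  case True then show ?thesis by simp
next
  case False
  hence ab': "a < b" using ab by simp
  define t where "t = (w b - w a) / (b - a)"
  have i1: "(w' has_integral (w b - w a)) {a..b}"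
    using fundamental_theorem_of_calculus[OF ab, of w w'] d
    by (auto simp: has_real_derivative_iff_has_vector_derivative[symmetric] intro: has_field_derivative_at_within)
  have c2: "continuous_on {a..b} (\<lambda>x. (w' x)^2)"
    by (intro continuous_intros continuous_on_subset[OF c]) auto
  have i2: "((\<lambda>x. (w' x)^2) has_integral integral {a..b} (\<lambda>x. (w' x)^2)) {a..b}"
    using integrable_continuous_interval[OF c2] by (simp add: has_integral_integral)
  have i3: "((\<lambda>x. (w' x)^2 - 2 * t * w' x + t^2) has_integral
      (integral {a..b} (\<lambda>x. (w' x)^2) - 2 * t * (w b - w a) + t^2 * (b - a))) {a..b}"
    using has_integral_add[OF has_integral_diff[OF i2 has_integral_mult_right[OF i1, of "2*t"]]
        has_integral_const_real[of "t^2" a b]] ab by (simp add: algebra_simps)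
  have "0 \<le> integral {a..b} (\<lambda>x. (w' x)^2) - 2 * t * (w b - w a) + t^2 * (b - a)"
  proof (rule has_integral_nonneg[OF i3])
    fix x show "0 \<le> (w' x)^2 - 2 * t * w' x + t^2"
      using zero_le_power2[of "w' x - t"] by (simp add: power2_eq_square algebra_simps)
  qed
  moreover have "2 * t * (w b - w a) - t^2 * (b - a) = (w b - w a)^2 / (b - a)"
  proof -
    define D where "D = w b - w a"
    define L where "L = b - a"
    have L: "L \<noteq> 0" using ab' by (simp add: L_def)
    have tL: "t * L = D" using L by (simp add: t_def D_def L_def)
    have "t^2 * L = t * D" by (simp add: power2_eq_square tL[symmetric])
    moreover have "t * D = D^2 / L" by (simp add: t_def D_def L_def power2_eq_square)
    ultimately show ?thesis by (simp add: D_def L_def)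
  qed
  ultimately have "(w b - w a)^2 / (b - a) \<le> integral {a..b} (\<lambda>x. (w' x)^2)" by linarith
  then show ?thesis using ab' by (simp add: divide_le_eq mult.commute)
qed


lemma sobolev_key:
  fixes w w' :: "real \<Rightarrow> real"
  assumes p: "\<And>x. w (x + 1) = w x" and d: "\<And>x. (w has_real_derivative w' x) (at x)"
    and c: "continuous_on UNIV w'" and A: "A > 0"
    and I1: "integral {0..1} (\<lambda>x. (w' x)^2) \<le> A"
  shows "(w x - w z)^2 \<le> 2 * A * \<bar>x - z\<bar>"
proof -
  have pw': "w' (x + 1) = w' x" for x by (rule periodic_deriv[OF p d])
  have cs: "continuous_on S (\<lambda>x. (w' x)^2)" for S
    by (intro continuous_intros continuous_on_subset[OF c]) auto
  have int: "(\<lambda>x. (w' x)^2) integrable_on {a..b}" for a b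
    by (rule integrable_continuous_interval[OF cs])
  have "integral {1..2} (\<lambda>x. (w' x)^2) = integral {0..1} ((\<lambda>x. (w' x)^2) \<circ> (+) 1)"
    using integral_shift_Icc_real[of 0 1 "\<lambda>x. (w' x)^2" 1] by simp
  also have "\<dots> = integral {0..1} (\<lambda>x. (w' x)^2)"
    using pw' by (simp add: o_def add.commute)
  finally have i12: "integral {1..2} (\<lambda>x. (w' x)^2) = integral {0..1} (\<lambda>x. (w' x)^2)" .
  have "integral {0..1} (\<lambda>x. (w' x)^2) + integral {1..2} (\<lambda>x. (w' x)^2) = integral {0..2} (\<lambda>x. (w' x)^2)"
    by (rule Henstock_Kurzweil_Integration.integral_combine[OF _ _ int]) auto
  with i12 I1 have I2: "integral {0..2} (\<lambda>x. (w' x)^2) \<le> 2 * A" by simp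
  have key1: "(w c - w a)^2 \<le> (c - a) * (2 * A)" if "0 \<le> a" "a \<le> c" "c \<le> 2" for a c
  proof -
    have "integral {a..c} (\<lambda>x. (w' x)^2) \<le> integral {0..2} (\<lambda>x. (w' x)^2)"
      by (rule integral_subset_le) (use that in \<open>auto intro: int\<close>)
    with I2 have "integral {a..c} (\<lambda>x. (w' x)^2) \<le> 2 * A" by simp
    hence "(c - a) * integral {a..c} (\<lambda>x. (w' x)^2) \<le> (c - a) * (2 * A)"
      using that by (simp add: mult_left_mono)
    with sq_diff_le[OF that(2) d c] show ?thesis by simp
  qed
  have pint: "w (y + real_of_int k) = w y" for y k by (rule periodic_int[of w, OF p])
  have fr: "y - real_of_int \<lfloor>y\<rfloor> \<ge> 0" "y - real_of_int \<lfloor>y\<rfloor> < 1" for y :: real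
    by (auto simp: floor_le_iff) (smt (verit) real_of_int_floor_add_one_gt)
  have wfr: "w (y - real_of_int \<lfloor>y\<rfloor>) = w y" for y
    using pint[of y "- \<lfloor>y\<rfloor>"] by simp
  have key2: "(w z - w x)^2 \<le> 2 * A * (z - x)" if xz: "x \<le> z" for x z
  proof (cases "z - x < 1")
    case True
    define a where "a = x - real_of_int \<lfloor>x\<rfloor>"
    define b where "b = z - real_of_int \<lfloor>x\<rfloor>"
    have wa: "w a = w x" using wfr by (simp add: a_def)
    have wb: "w b = w z" using pint[of z "- \<lfloor>x\<rfloor>"] by (simp add: b_def)
    have "0 \<le> a" "a \<le> b" "b \<le> 2" using fr[of x] True xz by (auto simp: a_def b_def)
    from key1[OF this] have "(w b - w a)^2 \<le> (b - a) * (2 * A)" .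
    moreover have "b - a = z - x" by (simp add: a_def b_def)
    ultimately show ?thesis using wa wb by (simp add: mult.commute)
  next
    case False
    define a where "a = x - real_of_int \<lfloor>x\<rfloor>"
    define b where "b = z - real_of_int \<lfloor>z\<rfloor>"
    have wa: "w a = w x" using wfr by (simp add: a_def)
    have wb: "w b = w z" using wfr by (simp add: b_def)
    have ra: "0 \<le> a" "a \<le> 1" and rb: "0 \<le> b" "b \<le> 1" using fr[of x] fr[of z] by (auto simp: a_def b_def)
    have "(w b - w a)^2 \<le> 2 * A"
    proof (cases "a \<le> b")
      case True
      from key1[OF ra(1) True] rb have "(w b - w a)^2 \<le> (b - a) * (2 * A)" by simp
      also have "\<dots> \<le> 1 * (2 * A)" using ra rb A by (intro mult_right_mono) auto
      finally show ?thesis by simp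
    next
      case False
      from key1[OF rb(1), of a] False ra have "(w a - w b)^2 \<le> (a - b) * (2 * A)" by simp
      also have "\<dots> \<le> 1 * (2 * A)" using ra rb A by (intro mult_right_mono) auto
      finally show ?thesis by (simp add: power2_commute)
    qed
    also have "\<dots> \<le> 2 * A * (z - x)" using False A by simp
    finally show ?thesis using wa wb by simp
  qed
  show ?thesis
  proof (cases "x \<le> z")
    case True
    then show ?thesis using key2[OF True] by (simp add: power2_commute)
  next
    case False
    then show ?thesis using key2[of z x] by simp
  qed
qed

lemma tdist_props: "0 \<le> tdist x y" "tdist x y \<le> 1"
proof -
  have bdd: "bdd_below ((\<lambda>k::int. \<bar>x - y - of_int k\<bar>) ` UNIV)"
    unfolding bdd_below_def by (rule exI[of _ 0]) auto
  show "0 \<le> tdist x y" unfolding tdist_def by (rule cINF_greatest) auto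
  have "tdist x y \<le> \<bar>x - y - of_int \<lfloor>x - y\<rfloor>\<bar>"
    unfolding tdist_def by (rule cINF_lower[OF bdd]) auto
  also have "\<dots> \<le> 1"
  proof -
    have "of_int \<lfloor>x - y\<rfloor> \<le> x - y" "x - y < of_int \<lfloor>x - y\<rfloor> + 1"
      by (rule of_int_floor_le, rule real_of_int_floor_add_one_gt)
    then show ?thesis by linarith
  qed
  finally show "tdist x y \<le> 1" .
qed

lemma sobolev:
  fixes w w' :: "real \<Rightarrow> real"
  assumes p: "\<And>x. w (x + 1) = w x" and d: "\<And>x. (w has_real_derivative w' x) (at x)"
    and c: "continuous_on UNIV w'" and A: "A > 0"
    and I0: "integral {0..1} (\<lambda>x. (w x)^2) \<le> A"
    and I1: "integral {0..1} (\<lambda>x. (w' x)^2) \<le> A"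
  shows "\<forall>x y. \<bar>w x - w y\<bar> \<le> 2 * sqrt A * sqrt (tdist x y)"
    and "\<forall>x. \<bar>w x\<bar> \<le> 3 * sqrt A"
proof -
  have hol: "\<bar>w x - w y\<bar> \<le> 2 * sqrt A * sqrt (tdist x y)" for x y
  proof -
    have "(w x - w y)^2 / (2 * A) \<le> tdist x y"
      unfolding tdist_def
    proof (rule cINF_greatest)
      fix k :: int
      have "(w x - w (y + of_int k))^2 \<le> 2 * A * \<bar>x - (y + of_int k)\<bar>"
        by (rule sobolev_key[OF p d c A I1])
      then show "(w x - w y)^2 / (2 * A) \<le> \<bar>x - y - of_int k\<bar>"
        using periodic_int[of w, OF p, of y k] A by (simp add: divide_le_eq algebra_simps)
    qed auto
    hence "(w x - w y)^2 \<le> 2 * A * tdist x y" using A by (simp add: divide_le_eq mult.commute)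
    hence "sqrt ((w x - w y)^2) \<le> sqrt (2 * A * tdist x y)" by (rule real_sqrt_le_mono)
    hence "\<bar>w x - w y\<bar> \<le> sqrt 2 * sqrt A * sqrt (tdist x y)" by (simp add: real_sqrt_mult)
    also have "\<dots> \<le> 2 * sqrt A * sqrt (tdist x y)"
    proof -
      have "sqrt 2 \<le> sqrt 4" by (rule real_sqrt_le_mono) simp
      hence "sqrt 2 \<le> 2" by simp
      then show ?thesis using A tdist_props[of x y] by (intro mult_right_mono) auto
    qed
    finally show ?thesis .
  qed
  then show "\<forall>x y. \<bar>w x - w y\<bar> \<le> 2 * sqrt A * sqrt (tdist x y)" by blast
  have cw: "continuous_on UNIV w"
    using d by (intro continuous_at_imp_continuous_on) (auto intro: DERIV_isCont)
  have cw2: "continuous_on {0..1} (\<lambda>x. (w x)^2)"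
    by (intro continuous_intros continuous_on_subset[OF cw]) auto
  obtain y0 where y0: "y0 \<in> {0..1}" "\<And>y. y \<in> {0..1} \<Longrightarrow> (w y0)^2 \<le> (w y)^2"
    using continuous_attains_inf[OF compact_Icc _ cw2] by auto
  have "integral {0..1} (\<lambda>y::real. (w y0)^2) \<le> integral {0..1} (\<lambda>y. (w y)^2)"
    by (rule Henstock_Kurzweil_Integration.integral_le) (auto intro: y0 integrable_continuous_interval[OF cw2])
  with I0 have "(w y0)^2 \<le> A" by simp
  hence wy0: "\<bar>w y0\<bar> \<le> sqrt A" using real_sqrt_le_mono by fastforce
  show "\<forall>x. \<bar>w x\<bar> \<le> 3 * sqrt A"
  proof
    fix x
    have "\<bar>w x\<bar> \<le> \<bar>w y0\<bar> + \<bar>w x - w y0\<bar>" by simp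
    also have "\<dots> \<le> sqrt A + 2 * sqrt A * sqrt (tdist x y0)" using wy0 hol[of x y0] by simp
    also have "\<dots> \<le> sqrt A + 2 * sqrt A * 1"
      using tdist_props[of x y0] A by (intro add_left_mono mult_left_mono) auto
    finally show "\<bar>w x\<bar> \<le> 3 * sqrt A" by simp
  qed
qed


lemma energy:
  fixes u u1 u2 m m1 m2 H h1 h2 W w1 w2 :: "real \<Rightarrow> real" and \<epsilon> \<alpha> C1 D1 K B :: real
  assumes du1: "\<And>x. (u has_real_derivative u1 x) (at x)" and du2: "\<And>x. (u1 has_real_derivative u2 x) (at x)"
    and cu2: "continuous_on UNIV u2"
    and dm1: "\<And>x. (m has_real_derivative m1 x) (at x)" and dm2: "\<And>x. (m1 has_real_derivative m2 x) (at x)"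
    and cm2: "continuous_on UNIV m2"
    and dH1: "\<And>p. (H has_real_derivative h1 p) (at p)" and dH2: "\<And>p. (h1 has_real_derivative h2 p) (at p)"
    and dW1: "\<And>x. (W has_real_derivative w1 x) (at x)" and dW2: "\<And>x. (w1 has_real_derivative w2 x) (at x)"
    and per: "u 1 = u 0" "u1 1 = u1 0" "m 1 = m 0" "m1 1 = m1 0" "W 1 = W 0" "w1 1 = w1 0"
    and mpos: "\<And>x. m x > 0" and eps: "0 < \<epsilon>" "\<epsilon> \<le> 1" and al: "\<alpha> > 0"
    and Wb: "\<And>x. \<bar>W x\<bar> \<le> K" and W2b: "\<And>x. \<bar>w2 x\<bar> \<le> K"
    and Hb: "\<And>p. H p \<ge> - C1" and Lb: "\<And>p. p * h1 p - H p \<ge> - D1" and h2p: "\<And>p. h2 p \<ge> 0"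
    and Bb: "\<And>t. t > 0 \<Longrightarrow> t * t powr \<alpha> - t powr \<alpha> - (D1 + K + 2) * t \<ge> - B"
    and E1: "\<And>x. u x - u2 x + H (u1 x) + W x = m x powr \<alpha> + \<epsilon> * (m x - m2 x)"
    and E2: "\<And>x. m x - m2 x - (h2 (u1 x) * u2 x * m x + h1 (u1 x) * m1 x) = 1 - \<epsilon> * (u x - u2 x)"
  shows "\<epsilon> * integral {0..1} (\<lambda>x. (u x)^2) \<le> C1 + K + B"
    and "\<epsilon> * integral {0..1} (\<lambda>x. (u1 x)^2) \<le> C1 + K + B"
    and "\<epsilon> * integral {0..1} (\<lambda>x. (m x)^2) \<le> C1 + K + B"
    and "\<epsilon> * integral {0..1} (\<lambda>x. (m1 x)^2) \<le> C1 + K + B"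
    and "\<epsilon> * integral {0..1} (\<lambda>x. (u2 x)^2) \<le> K * (C1 + K + B)"
    and "\<epsilon> * integral {0..1} (\<lambda>x. (m2 x)^2) \<le> K * (C1 + K + B)"
proof -
  define M where "M = C1 + K + B"
  have dhu: "((\<lambda>x. h1 (u1 x)) has_real_derivative h2 (u1 x) * u2 x) (at x)" for x
    by (rule DERIV_chain2[OF dH2 du2])
  have dHu: "((\<lambda>x. H (u1 x)) has_real_derivative h1 (u1 x) * u2 x) (at x)" for x
    by (rule DERIV_chain2[OF dH1 du2])
  have dmp: "((\<lambda>x. m x powr \<alpha>) has_real_derivative \<alpha> * m x powr (\<alpha> - 1) * m1 x) (at x)" for x
    using DERIV_fun_powr[OF dm1 mpos, of \<alpha> x] by simp
  have cu: "continuous_on UNIV u" using du1 by (intro continuous_at_imp_continuous_on) (auto intro: DERIV_isCont)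
  have cu1: "continuous_on UNIV u1" using du2 by (intro continuous_at_imp_continuous_on) (auto intro: DERIV_isCont)
  have cm: "continuous_on UNIV m" using dm1 by (intro continuous_at_imp_continuous_on) (auto intro: DERIV_isCont)
  have cm1: "continuous_on UNIV m1" using dm2 by (intro continuous_at_imp_continuous_on) (auto intro: DERIV_isCont)
  define P where "P x = m1 x * u x - u1 x * m x + u1 x + h1 (u1 x) * m x * u x
      + \<epsilon> * m1 x * (m x - 1) + \<epsilon> * u1 x * u x" for x
  define P' where "P' x = m2 x * u x + m1 x * u1 x - (u2 x * m x + u1 x * m1 x) + u2 x
      + ((h2 (u1 x) * u2 x * m x + h1 (u1 x) * m1 x) * u x + h1 (u1 x) * m x * u1 x)
      + \<epsilon> * (m2 x * (m x - 1) + m1 x * m1 x) + \<epsilon> * (u2 x * u x + u1 x * u1 x)" for x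
  have dP: "(P has_real_derivative P' x) (at x)" for x
    unfolding P_def[abs_def] P'_def
    by (auto intro!: derivative_eq_intros du1 du2 dm1 dm2 dhu simp: algebra_simps)
  have iP: "(P' has_integral 0) {0..1}"
    using fundamental_theorem_of_calculus[of 0 1 P P'] dP per
    by (auto simp: P_def has_real_derivative_iff_has_vector_derivative[symmetric] intro: has_field_derivative_at_within)
  define Q where "Q x = \<epsilon> * (u x)^2 + \<epsilon> * (u1 x)^2 + \<epsilon> * (m x)^2 + \<epsilon> * (m1 x)^2 + m x" for x
  have QP: "Q x \<le> P' x + M" for x
  proof -
    define F1 where "F1 = u x - u2 x + H (u1 x) + W x - (m x powr \<alpha> + \<epsilon> * (m x - m2 x))"
    define F2 where "F2 = m x - m2 x - (h2 (u1 x) * u2 x * m x + h1 (u1 x) * m1 x) - (1 - \<epsilon> * (u x - u2 x))"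
    have F0: "F1 = 0" "F2 = 0" using E1[of x] E2[of x] by (simp_all add: F1_def F2_def)
    have id: "P' x = m x * (u1 x * h1 (u1 x) - H (u1 x)) + H (u1 x) - W x * (m x - 1)
       + m x * m x powr \<alpha> - m x powr \<alpha> + \<epsilon> * ((m x)^2 + (m1 x)^2 + (u x)^2 + (u1 x)^2) - \<epsilon> * m x
       + F1 * (m x - 1) - F2 * u x"
      unfolding P'_def F1_def F2_def by (simp add: algebra_simps power2_eq_square)
    have a1: "m x * (u1 x * h1 (u1 x) - H (u1 x)) \<ge> m x * (- D1)"
      using Lb[of "u1 x"] mpos[of x] by (intro mult_left_mono) auto
    have a2: "W x * m x \<le> K * m x" using Wb[of x] mpos[of x] by (intro mult_right_mono) auto
    have a3: "W x \<ge> - K" using Wb[of x] by auto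
    have a4: "\<epsilon> * m x \<le> m x" using eps mpos[of x] by (simp add: mult_le_cancel_right1)
    have a5: "m x * m x powr \<alpha> - m x powr \<alpha> - (D1 + K + 2) * m x \<ge> - B" using Bb mpos by blast
    show ?thesis using id F0 a1 a2 a3 a4 a5 Hb[of "u1 x"]
      unfolding Q_def M_def by (simp add: algebra_simps)
  qed
  have cQ: "continuous_on UNIV Q" unfolding Q_def[abs_def]
    by (intro continuous_intros cu cu1 cm cm1)
  have iQ: "Q integrable_on {0..1}" by (rule integrable_continuous_interval[OF continuous_on_subset[OF cQ]]) auto
  have iPM: "((\<lambda>x. P' x + M) has_integral M) {0..1}"
    using has_integral_add[OF iP has_integral_const_real[of M 0 1]] by simp
  have IQ: "integral {0..1} Q \<le> M"
    by (rule has_integral_le[OF integrable_integral[OF iQ] iPM]) (use QP in auto)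
  have sq_int: "(\<lambda>x. \<epsilon> * (f x)^2) integrable_on {0..1}" if "continuous_on UNIV f" for f :: "real \<Rightarrow> real"
  proof -
    have "continuous_on {0..1} (\<lambda>x. \<epsilon> * (f x)^2)"
      by (intro continuous_intros continuous_on_subset[OF that]) auto
    then show ?thesis by (rule integrable_continuous_interval)
  qed
  have bnd: "\<epsilon> * integral {0..1} (\<lambda>x. (f x)^2) \<le> M"
    if cf: "continuous_on UNIV f" and le: "\<And>x. \<epsilon> * (f x)^2 \<le> Q x" for f :: "real \<Rightarrow> real"
  proof -
    have "integral {0..1} (\<lambda>x. \<epsilon> * (f x)^2) \<le> integral {0..1} Q"
      by (rule Henstock_Kurzweil_Integration.integral_le[OF sq_int[OF cf] iQ]) (use le in auto)
    then show ?thesis using IQ by simp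
  qed
  have nn: "0 \<le> \<epsilon> * (f x)^2" for f :: "real \<Rightarrow> real" and x using eps by simp
  have mQ: "m x \<le> Q x" for x unfolding Q_def using nn[of u x] nn[of u1 x] nn[of m x] nn[of m1 x] by linarith
  show "\<epsilon> * integral {0..1} (\<lambda>x. (u x)^2) \<le> C1 + K + B"
    using bnd[OF cu] nn[of u] nn[of u1] nn[of m] nn[of m1] mpos unfolding M_def Q_def by (smt (verit))
  show "\<epsilon> * integral {0..1} (\<lambda>x. (u1 x)^2) \<le> C1 + K + B"
    using bnd[OF cu1] nn[of u] nn[of u1] nn[of m] nn[of m1] mpos unfolding M_def Q_def by (smt (verit))
  show "\<epsilon> * integral {0..1} (\<lambda>x. (m x)^2) \<le> C1 + K + B"
    using bnd[OF cm] nn[of u] nn[of u1] nn[of m] nn[of m1] mpos unfolding M_def Q_def by (smt (verit))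
  show "\<epsilon> * integral {0..1} (\<lambda>x. (m1 x)^2) \<le> C1 + K + B"
    using bnd[OF cm1] nn[of u] nn[of u1] nn[of m] nn[of m1] mpos unfolding M_def Q_def by (smt (verit))
  have im: "m integrable_on {0..1}" by (rule integrable_continuous_interval[OF continuous_on_subset[OF cm]]) auto
  have Im: "integral {0..1} m \<le> M"
    using Henstock_Kurzweil_Integration.integral_le[OF im iQ] mQ IQ by fastforce
  have K0: "K \<ge> 0" using Wb[of 0] by simp
  define P2 where "P2 x = m x * u1 x - u x * m1 x - H (u1 x) * m1 x + w1 x * m x - W x * m1 x
      + m x powr \<alpha> * m1 x + \<epsilon> * m x * m1 x + \<epsilon> * u x * u1 x - u1 x" for x
  define P2' where "P2' x = m1 x * u1 x + m x * u2 x - (u1 x * m1 x + u x * m2 x)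
      - (h1 (u1 x) * u2 x * m1 x + H (u1 x) * m2 x) + (w2 x * m x + w1 x * m1 x)
      - (w1 x * m1 x + W x * m2 x) + (\<alpha> * m x powr (\<alpha> - 1) * m1 x * m1 x + m x powr \<alpha> * m2 x)
      + \<epsilon> * (m1 x * m1 x + m x * m2 x) + \<epsilon> * (u1 x * u1 x + u x * u2 x) - u2 x" for x
  have dP2: "(P2 has_real_derivative P2' x) (at x)" for x
    unfolding P2_def[abs_def] P2'_def
    by (auto intro!: derivative_eq_intros du1 du2 dm1 dm2 dHu dmp dW1 dW2 simp: algebra_simps mpos)
  have iP2: "(P2' has_integral 0) {0..1}"
    using fundamental_theorem_of_calculus[of 0 1 P2 P2'] dP2 per
    by (auto simp: P2_def has_real_derivative_iff_has_vector_derivative[symmetric] intro: has_field_derivative_at_within)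
  define Q2 where "Q2 x = \<epsilon> * (u2 x)^2 + \<epsilon> * (m2 x)^2" for x
  have QP2: "Q2 x \<le> P2' x + K * m x" for x
  proof -
    define F1 where "F1 = u x - u2 x + H (u1 x) + W x - (m x powr \<alpha> + \<epsilon> * (m x - m2 x))"
    define F2 where "F2 = m x - m2 x - (h2 (u1 x) * u2 x * m x + h1 (u1 x) * m1 x) - (1 - \<epsilon> * (u x - u2 x))"
    have F0: "F1 = 0" "F2 = 0" using E1[of x] E2[of x] by (simp_all add: F1_def F2_def)
    have id: "P2' x = w2 x * m x + \<alpha> * m x powr (\<alpha> - 1) * (m1 x)^2 + \<epsilon> * ((m1 x)^2 + (m2 x)^2)
       + \<epsilon> * ((u1 x)^2 + (u2 x)^2) + h2 (u1 x) * m x * (u2 x)^2 - F1 * m2 x + F2 * u2 x"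
      unfolding P2'_def F1_def F2_def by (simp add: algebra_simps power2_eq_square)
    have b1: "w2 x * m x \<ge> - K * m x" using W2b[of x] mpos[of x] by (intro mult_right_mono) auto
    have b2: "\<alpha> * m x powr (\<alpha> - 1) * (m1 x)^2 \<ge> 0" using al by simp
    have b3: "h2 (u1 x) * m x * (u2 x)^2 \<ge> 0" using h2p[of "u1 x"] mpos[of x] by simp
    have b4: "\<epsilon> * (m1 x)^2 \<ge> 0" "\<epsilon> * (u1 x)^2 \<ge> 0" using eps by auto
    show ?thesis using id F0 b1 b2 b3 b4 unfolding Q2_def by (simp add: algebra_simps)
  qed
  have iPK: "((\<lambda>x. P2' x + K * m x) has_integral (K * integral {0..1} m)) {0..1}"
    using has_integral_add[OF iP2 has_integral_mult_right[OF integrable_integral[OF im], of K]] by simp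
  have cQ2: "continuous_on UNIV Q2" unfolding Q2_def[abs_def]
    by (intro continuous_intros cu2 cm2)
  have iQ2: "Q2 integrable_on {0..1}" by (rule integrable_continuous_interval[OF continuous_on_subset[OF cQ2]]) auto
  have IQ2: "integral {0..1} Q2 \<le> K * M"
  proof -
    have "integral {0..1} Q2 \<le> K * integral {0..1} m"
      by (rule has_integral_le[OF integrable_integral[OF iQ2] iPK]) (use QP2 in auto)
    also have "\<dots> \<le> K * M" using Im K0 by (intro mult_left_mono) auto
    finally show ?thesis .
  qed
  have bnd2: "\<epsilon> * integral {0..1} (\<lambda>x. (f x)^2) \<le> K * M"
    if cf: "continuous_on UNIV f" and le: "\<And>x. \<epsilon> * (f x)^2 \<le> Q2 x" for f :: "real \<Rightarrow> real"
  proof -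
    have "integral {0..1} (\<lambda>x. \<epsilon> * (f x)^2) \<le> integral {0..1} Q2"
      by (rule Henstock_Kurzweil_Integration.integral_le[OF sq_int[OF cf] iQ2]) (use le in auto)
    then show ?thesis using IQ2 by simp
  qed
  show "\<epsilon> * integral {0..1} (\<lambda>x. (u2 x)^2) \<le> K * (C1 + K + B)"
    using bnd2[OF cu2] nn[of u2] nn[of m2] unfolding M_def Q2_def by (smt (verit))
  show "\<epsilon> * integral {0..1} (\<lambda>x. (m2 x)^2) \<le> K * (C1 + K + B)"
    using bnd2[OF cm2] nn[of u2] nn[of m2] unfolding M_def Q2_def by (smt (verit))
qed


lemma C2_E:
  assumes "C2 f"
  obtains f1 f2 where "\<And>x. (f has_real_derivative f1 x) (at x)" "\<And>x. (f1 has_real_derivative f2 x) (at x)"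
    "continuous_on UNIV f2" "deriv f = f1" "deriv f1 = f2"
proof -
  from assms obtain f1 f2 where d1: "\<forall>x. (f has_real_derivative f1 x) (at x)"
    and d2: "\<forall>x. (f1 has_real_derivative f2 x) (at x)" and c: "continuous_on UNIV f2"
    unfolding C2_def by blast
  have "deriv f = f1" using d1 by (auto intro!: ext DERIV_imp_deriv)
  moreover have "deriv f1 = f2" using d2 by (auto intro!: ext DERIV_imp_deriv)
  ultimately show ?thesis using that d1 d2 c by blast
qed

lemma cont_of_deriv:
  assumes "\<And>x. (f has_real_derivative f1 x) (at x)" shows "continuous_on UNIV f"
  using assms by (intro continuous_at_imp_continuous_on) (auto intro: DERIV_isCont)

lemma sup_bound:
  fixes f :: "real \<Rightarrow> real"
  assumes p: "\<And>x. f (x + 1) = f x" and c: "continuous_on UNIV f"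
  shows "\<bar>f x\<bar> \<le> (SUP y. \<bar>f y\<bar>)" and "0 \<le> (SUP y. \<bar>f y\<bar>)"
proof -
  obtain Bd where Bd: "\<And>x. \<bar>f x\<bar> \<le> Bd" using periodic_bounded[OF p c] by blast
  have bdd: "bdd_above (range (\<lambda>y. \<bar>f y\<bar>))" unfolding bdd_above_def using Bd by auto
  show "\<bar>f x\<bar> \<le> (SUP y. \<bar>f y\<bar>)" by (rule cSUP_upper[OF _ bdd]) simp
  then show "0 \<le> (SUP y. \<bar>f y\<bar>)" using abs_ge_zero order_trans by blast
qed

lemma B_bound:
  fixes \<alpha> A :: real
  assumes al: "\<alpha> > 0" and A: "A > 0"
  defines "R \<equiv> max 2 ((2 * A) powr (1 / \<alpha>))"
  shows "\<And>t. t > 0 \<Longrightarrow> t * t powr \<alpha> - t powr \<alpha> - A * t \<ge> - (A * R + R powr \<alpha>)"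
    and "A * R + R powr \<alpha> \<ge> 0"
proof -
  have R2: "R \<ge> 2" by (simp add: R_def)
  show "A * R + R powr \<alpha> \<ge> 0" using R2 A by simp
  fix t :: real assume t: "t > 0"
  show "t * t powr \<alpha> - t powr \<alpha> - A * t \<ge> - (A * R + R powr \<alpha>)"
  proof (cases "t \<ge> R")
    case True
    have "R powr \<alpha> \<ge> ((2 * A) powr (1 / \<alpha>)) powr \<alpha>"
      by (rule powr_mono2) (use al A in \<open>auto simp: R_def\<close>)
    also have "((2 * A) powr (1 / \<alpha>)) powr \<alpha> = 2 * A" using al A by (simp add: powr_powr)
    finally have "R powr \<alpha> \<ge> 2 * A" .
    moreover have "t powr \<alpha> \<ge> R powr \<alpha>" using True R2 al by (intro powr_mono2) auto
    ultimately have ta: "t powr \<alpha> \<ge> 2 * A" by simp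
    have "(t - 1) * t powr \<alpha> \<ge> (t - 1) * (2 * A)" using ta True R2 by (intro mult_left_mono) auto
    moreover have "A * R + R powr \<alpha> \<ge> 0" using R2 A by simp
    moreover have "A * t \<ge> A * 2" using True R2 A by simp
    moreover have "A * R \<ge> 0" "R powr \<alpha> \<ge> 0" using R2 A by auto
    moreover have "(t - 1) * t powr \<alpha> = t * t powr \<alpha> - t powr \<alpha>" "(t - 1) * (2 * A) = 2 * (A * t) - 2 * A"
      by (simp_all add: algebra_simps)
    ultimately show ?thesis by linarith
  next
    case False
    have "t powr \<alpha> \<le> R powr \<alpha>" using False t al by (intro powr_mono2) auto
    moreover have "A * t \<le> A * R" using False A by simp
    moreover have "t * t powr \<alpha> \<ge> 0" using t by simp
    ultimately show ?thesis by linarith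
  qed
qed


theorem mainTheorem6:
  fixes \<alpha> \<gamma> C\<^sub>1 C\<^sub>2 C\<^sub>3 D\<^sub>1 D\<^sub>2 D\<^sub>3 K :: real
  assumes "\<alpha> > 0" and "\<gamma> > 1"
    and "C\<^sub>1 > 0" and "C\<^sub>2 > 0" and "C\<^sub>3 > 0"
    and "D\<^sub>1 > 0" and "D\<^sub>2 > 0" and "D\<^sub>3 > 0"
  shows "\<exists>C>0. \<forall>H V :: real \<Rightarrow> real.
     C2 H \<and>
     (\<forall>p. - C\<^sub>1 + C\<^sub>2 * \<bar>p\<bar> powr \<gamma> \<le> H p \<and> H p \<le> C\<^sub>1 + C\<^sub>3 * \<bar>p\<bar> powr \<gamma>) \<and>
     (\<forall>p. - D\<^sub>1 + D\<^sub>2 * \<bar>p\<bar> powr \<gamma> \<le> p * deriv H p - H p \<and>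
          p * deriv H p - H p \<le> D\<^sub>1 + D\<^sub>3 * \<bar>p\<bar> powr \<gamma>) \<and>
     periodic1 V \<and> C2 V \<and> convex_on UNIV H \<and>
     c2norm V \<le> K \<longrightarrow>
     (\<forall>\<epsilon> lam u m. 0 < \<epsilon> \<and> \<epsilon> \<le> 1 \<and> 0 \<le> lam \<and> lam \<le> 1 \<and>
        solves_P1 H (\<lambda>x. lam * V x) \<alpha> \<epsilon> u m \<longrightarrow>
        (\<forall>w \<in> {u, deriv u, m, deriv m}.
           (\<forall>x. \<bar>w x\<bar> \<le> C / sqrt \<epsilon>) \<and>
           (\<forall>x y. \<bar>w x - w y\<bar> \<le> C / sqrt \<epsilon> * sqrt (tdist x y))))"
proof -
  note al = assms(1)
  define Ka where "Ka = \<bar>K\<bar>"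
  define A0 where "A0 = D\<^sub>1 + Ka + 2"
  have A0: "A0 > 0" using assms by (simp add: A0_def Ka_def)
  define R where "R = max 2 ((2 * A0) powr (1 / \<alpha>))"
  define B where "B = A0 * R + R powr \<alpha>"
  have Bb: "\<And>t. t > 0 \<Longrightarrow> t * t powr \<alpha> - t powr \<alpha> - (D\<^sub>1 + Ka + 2) * t \<ge> - B"
    and B0: "B \<ge> 0"
    using B_bound[OF al A0] unfolding B_def R_def A0_def by auto
  define M where "M = C\<^sub>1 + Ka + B"
  have M0: "M \<ge> 0" using assms B0 by (simp add: M_def Ka_def)
  define N where "N = M + Ka * M + 1"
  have KM: "Ka * M \<ge> 0" using M0 by (simp add: Ka_def)
  have N0: "N > 0" using M0 KM by (simp add: N_def)
  have NM: "M \<le> N" "Ka * M \<le> N" using M0 KM by (simp_all add: N_def)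
  show ?thesis
  proof (rule exI[of _ "3 * sqrt N"], intro conjI allI impI)
    show "0 < 3 * sqrt N" using N0 by simp
    fix H V :: "real \<Rightarrow> real"
    assume hyp: "C2 H \<and>
     (\<forall>p. - C\<^sub>1 + C\<^sub>2 * \<bar>p\<bar> powr \<gamma> \<le> H p \<and> H p \<le> C\<^sub>1 + C\<^sub>3 * \<bar>p\<bar> powr \<gamma>) \<and>
     (\<forall>p. - D\<^sub>1 + D\<^sub>2 * \<bar>p\<bar> powr \<gamma> \<le> p * deriv H p - H p \<and>
          p * deriv H p - H p \<le> D\<^sub>1 + D\<^sub>3 * \<bar>p\<bar> powr \<gamma>) \<and>
     periodic1 V \<and> C2 V \<and> convex_on UNIV H \<and> c2norm V \<le> K"
    fix \<epsilon> lam :: real and u m :: "real \<Rightarrow> real"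
    assume sol: "0 < \<epsilon> \<and> \<epsilon> \<le> 1 \<and> 0 \<le> lam \<and> lam \<le> 1 \<and> solves_P1 H (\<lambda>x. lam * V x) \<alpha> \<epsilon> u m"
    have eps: "0 < \<epsilon>" "\<epsilon> \<le> 1" and lam: "0 \<le> lam" "lam \<le> 1" using sol by auto
    obtain h1 h2 where dH1: "\<And>x. (H has_real_derivative h1 x) (at x)"
      and dH2: "\<And>x. (h1 has_real_derivative h2 x) (at x)" and eH: "deriv H = h1"
      using C2_E[of H] hyp by metis
    obtain v1 v2 where dV1: "\<And>x. (V has_real_derivative v1 x) (at x)"
      and dV2: "\<And>x. (v1 has_real_derivative v2 x) (at x)" and cv2: "continuous_on UNIV v2"
      and eV1: "deriv V = v1" and eV2: "deriv v1 = v2"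
      using C2_E[of V] hyp by metis
    have sP: "solves_P1 H (\<lambda>x. lam * V x) \<alpha> \<epsilon> u m" using sol by blast
    obtain u1 u2 where du1: "\<And>x. (u has_real_derivative u1 x) (at x)"
      and du2: "\<And>x. (u1 has_real_derivative u2 x) (at x)" and cu2: "continuous_on UNIV u2"
      and eu1: "deriv u = u1" and eu2: "deriv u1 = u2"
      using C2_E[of u] sP unfolding solves_P1_def by metis
    obtain m1 m2 where dm1: "\<And>x. (m has_real_derivative m1 x) (at x)"
      and dm2: "\<And>x. (m1 has_real_derivative m2 x) (at x)" and cm2: "continuous_on UNIV m2"
      and em1: "deriv m = m1" and em2: "deriv m1 = m2"
      using C2_E[of m] sP unfolding solves_P1_def by metis
    have pu: "\<And>x. u (x + 1) = u x" and pm: "\<And>x. m (x + 1) = m x" and mpos: "\<And>x. m x > 0"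
      using sP unfolding solves_P1_def periodic1_def by auto
    have pV: "\<And>x. V (x + 1) = V x" using hyp unfolding periodic1_def by auto
    have pu1: "\<And>x. u1 (x + 1) = u1 x" by (rule periodic_deriv[OF pu du1])
    have pm1: "\<And>x. m1 (x + 1) = m1 x" by (rule periodic_deriv[OF pm dm1])
    have pv1: "\<And>x. v1 (x + 1) = v1 x" by (rule periodic_deriv[OF pV dV1])
    have pv2: "\<And>x. v2 (x + 1) = v2 x" by (rule periodic_deriv[OF pv1 dV2])
    have dprod: "deriv (\<lambda>y. deriv H (u1 y) * m y) x = h2 (u1 x) * u2 x * m x + h1 (u1 x) * m1 x" for x
    proof -
      have "((\<lambda>y. h1 (u1 y) * m y) has_real_derivative h2 (u1 x) * u2 x * m x + h1 (u1 x) * m1 x) (at x)"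
        using DERIV_mult[OF DERIV_chain2[OF dH2 du2] dm1, of x] by (simp add: mult.commute)
      then show ?thesis unfolding eH by (rule DERIV_imp_deriv)
    qed
    have E1: "\<And>x. u x - u2 x + H (u1 x) + lam * V x = m x powr \<alpha> + \<epsilon> * (m x - m2 x)"
      using sP unfolding solves_P1_def eu1 eu2 em1 em2 by auto
    have E2: "\<And>x. m x - m2 x - (h2 (u1 x) * u2 x * m x + h1 (u1 x) * m1 x) = 1 - \<epsilon> * (u x - u2 x)"
      using sP unfolding solves_P1_def eu1 eu2 em1 em2 dprod by auto
    have cV: "continuous_on UNIV V" by (rule cont_of_deriv[OF dV1])
    have cv1: "continuous_on UNIV v1" by (rule cont_of_deriv[OF dV2])
    have c2n: "c2norm V = (SUP x. \<bar>V x\<bar>) + (SUP x. \<bar>v1 x\<bar>) + (SUP x. \<bar>v2 x\<bar>)"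
      unfolding c2norm_def eV1 eV2 ..
    have Vb: "\<bar>V x\<bar> \<le> Ka" and V2b: "\<bar>v2 x\<bar> \<le> Ka" for x
      using sup_bound(1)[OF pV cV, of x] sup_bound(1)[OF pv2 cv2, of x] sup_bound(2)[OF pV cV] sup_bound(2)[OF pv1 cv1] sup_bound(2)[OF pv2 cv2] hyp c2n
      unfolding Ka_def by linarith+
    have Wb: "\<bar>lam * V x\<bar> \<le> Ka" for x
    proof -
      have "\<bar>lam * V x\<bar> = lam * \<bar>V x\<bar>" using lam by (simp add: abs_mult)
      also have "\<dots> \<le> 1 * Ka" using lam Vb[of x] by (intro mult_mono) (auto simp: Ka_def)
      finally show ?thesis by simp
    qed
    have W2b: "\<bar>lam * v2 x\<bar> \<le> Ka" for x
    proof -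
      have "\<bar>lam * v2 x\<bar> = lam * \<bar>v2 x\<bar>" using lam by (simp add: abs_mult)
      also have "\<dots> \<le> 1 * Ka" using lam V2b[of x] by (intro mult_mono) (auto simp: Ka_def)
      finally show ?thesis by simp
    qed
    have Hb: "H p \<ge> - C\<^sub>1" for p
    proof -
      have "C\<^sub>2 * \<bar>p\<bar> powr \<gamma> \<ge> 0" using assms by simp
      moreover have "- C\<^sub>1 + C\<^sub>2 * \<bar>p\<bar> powr \<gamma> \<le> H p" using hyp by blast
      ultimately show ?thesis by linarith
    qed
    have Lb: "p * h1 p - H p \<ge> - D\<^sub>1" for p
    proof -
      have "D\<^sub>2 * \<bar>p\<bar> powr \<gamma> \<ge> 0" using assms by simp
      moreover have "- D\<^sub>1 + D\<^sub>2 * \<bar>p\<bar> powr \<gamma> \<le> p * deriv H p - H p" using hyp by blast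
      ultimately show ?thesis unfolding eH by linarith
    qed
    have h2p: "h2 p \<ge> 0" for p
      by (rule convex_second_deriv_nonneg[OF _ dH1 dH2]) (use hyp in blast)
    have dW1: "\<And>x. ((\<lambda>x. lam * V x) has_real_derivative lam * v1 x) (at x)"
      using dV1 by (auto intro!: derivative_eq_intros)
    have dW2: "\<And>x. ((\<lambda>x. lam * v1 x) has_real_derivative lam * v2 x) (at x)"
      using dV2 by (auto intro!: derivative_eq_intros)
    have per: "u 1 = u 0" "u1 1 = u1 0" "m 1 = m 0" "m1 1 = m1 0" "lam * V 1 = lam * V 0" "lam * v1 1 = lam * v1 0"
      using pu[of 0] pu1[of 0] pm[of 0] pm1[of 0] pV[of 0] pv1[of 0] by auto
    note en = energy[of u u1 u2 m m1 m2 H h1 h2 "\<lambda>x. lam * V x" "\<lambda>x. lam * v1 x" "\<lambda>x. lam * v2 x" \<epsilon> \<alpha> Ka C\<^sub>1 D\<^sub>1 B,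
        OF du1 du2 cu2 dm1 dm2 cm2 dH1 dH2 dW1 dW2 per mpos eps al Wb W2b Hb Lb h2p Bb E1 E2]
    define Aa where "Aa = N / \<epsilon>"
    have Aa: "Aa > 0" using N0 eps by (simp add: Aa_def)
    have toA: "integral {0..1} (\<lambda>x. (f x)^2) \<le> Aa" if "\<epsilon> * integral {0..1} (\<lambda>x. (f x)^2) \<le> M'" "M' \<le> N"
      for f :: "real \<Rightarrow> real" and M'
    proof -
      have "\<epsilon> * integral {0..1} (\<lambda>x. (f x)^2) \<le> N" using that by linarith
      then show ?thesis using eps by (simp add: Aa_def field_simps)
    qed
    have MN1: "C\<^sub>1 + Ka + B \<le> N" using NM(1) unfolding M_def .
    have MN2: "Ka * (C\<^sub>1 + Ka + B) \<le> N" using NM(2) unfolding M_def .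
    have Iu: "integral {0..1} (\<lambda>x. (u x)^2) \<le> Aa" by (rule toA[OF en(1) MN1])
    have Iu1: "integral {0..1} (\<lambda>x. (u1 x)^2) \<le> Aa" by (rule toA[OF en(2) MN1])
    have Im: "integral {0..1} (\<lambda>x. (m x)^2) \<le> Aa" by (rule toA[OF en(3) MN1])
    have Im1: "integral {0..1} (\<lambda>x. (m1 x)^2) \<le> Aa" by (rule toA[OF en(4) MN1])
    have Iu2: "integral {0..1} (\<lambda>x. (u2 x)^2) \<le> Aa" by (rule toA[OF en(5) MN2])
    have Im2: "integral {0..1} (\<lambda>x. (m2 x)^2) \<le> Aa" by (rule toA[OF en(6) MN2])
    have sA: "sqrt Aa = sqrt N / sqrt \<epsilon>" by (simp add: Aa_def real_sqrt_divide)
    have fin: "(\<forall>x. \<bar>w x\<bar> \<le> 3 * sqrt N / sqrt \<epsilon>) \<and>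
           (\<forall>x y. \<bar>w x - w y\<bar> \<le> 3 * sqrt N / sqrt \<epsilon> * sqrt (tdist x y))"
      if p: "\<And>x. w (x + 1) = w x" and d: "\<And>x. (w has_real_derivative w' x) (at x)"
        and c: "continuous_on UNIV w'" and I0: "integral {0..1} (\<lambda>x. (w x)^2) \<le> Aa"
        and I1: "integral {0..1} (\<lambda>x. (w' x)^2) \<le> Aa" for w w'
    proof
      note S = sobolev[OF p d c Aa I0 I1]
      show "\<forall>x. \<bar>w x\<bar> \<le> 3 * sqrt N / sqrt \<epsilon>" using S(2) sA by simp
      show "\<forall>x y. \<bar>w x - w y\<bar> \<le> 3 * sqrt N / sqrt \<epsilon> * sqrt (tdist x y)"
      proof (intro allI)
        fix x y
        have "\<bar>w x - w y\<bar> \<le> 2 * sqrt Aa * sqrt (tdist x y)" using S(1) by blast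
        also have "\<dots> \<le> 3 * sqrt Aa * sqrt (tdist x y)"
          using tdist_props[of x y] Aa by (intro mult_right_mono) auto
        finally show "\<bar>w x - w y\<bar> \<le> 3 * sqrt N / sqrt \<epsilon> * sqrt (tdist x y)" using sA by simp
      qed
    qed
    have cu1: "continuous_on UNIV u1" by (rule cont_of_deriv[OF du2])
    have cm1: "continuous_on UNIV m1" by (rule cont_of_deriv[OF dm2])
    note fu = fin[OF pu du1 cu1 Iu Iu1]
    note fu1 = fin[OF pu1 du2 cu2 Iu1 Iu2]
    note fm = fin[OF pm dm1 cm1 Im Im1]
    note fm1 = fin[OF pm1 dm2 cm2 Im1 Im2]
    show "\<forall>w \<in> {u, deriv u, m, deriv m}.
           (\<forall>x. \<bar>w x\<bar> \<le> 3 * sqrt N / sqrt \<epsilon>) \<and>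
           (\<forall>x y. \<bar>w x - w y\<bar> \<le> 3 * sqrt N / sqrt \<epsilon> * sqrt (tdist x y))"
      unfolding eu1 em1 using fu fu1 fm fm1 by blast
  qed
qed

end
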